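(* Let $n\ge4$ and let $x\in B$ with $|x|=2n+4$ and $\delta(x)=4$. Then $[x]_2\notin R$.
   Context: Stern's sequence $(a(n))_{n\ge0}$: $a(0)=0$, $a(1)=1$, $a(2n)=a(n)$, $a(2n+1)=a(n)+a(n+1)$; $s(n)=a(n+1)$. $R$ is the set of record-setters of $s$, i.e. indices $v\ge0$ with $s(i)<s(v)$ for all $i<v$. For a binary string $x$, $[x]_2$ is the integer it represents in base 2 and $|x|$ its length. $B$ denotes the set of nonempty binary strings that are concatenations of blocks each equal to $10$ or $100$; for $x\in B$, $\delta(x)$ is the number of $0$s minus the number of $1$s in $x$, which equals the number of $100$ blocks. *)

theory Defs
  imports Main
begin

function stern :: "nat \<Rightarrow> nat" where
  "stern 0 = 0"
| "stern (Suc 0) = 1"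
| "stern (Suc (Suc m)) = (if even m then stern (Suc (m div 2))
      else stern (Suc (m div 2)) + stern (Suc (Suc (m div 2))))"
  by pat_completeness auto
termination by (relation "measure id") (auto elim: oddE)

lemma stern_even: "stern (2 * n) = stern n"
proof (cases n)
  case (Suc k)
  then have "2 * n = Suc (Suc (2 * k))" by simp
  then show ?thesis using Suc by simp
qed simp

lemma stern_odd: "stern (2 * n + 1) = stern n + stern (n + 1)"
proof (cases n)
  case (Suc k)
  then have "2 * n + 1 = Suc (Suc (2 * k + 1))" by simp
  then show ?thesis using Suc by simp
qed simp

definition s :: "nat \<Rightarrow> nat" where
  "s n = stern (n + 1)"

definition R :: "nat set" where
  "R = {v. \<forall>i<v. s i < s v}"

text \<open>Binary strings are lists of bits, True = 1, most significant bit first.\<close>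
fun bin_val :: "bool list \<Rightarrow> nat" where
  "bin_val [] = 0"
| "bin_val (b # xs) = (if b then 2 ^ length xs else 0) + bin_val xs"

definition B :: "bool list set" where
  "B = {concat bs | bs. bs \<noteq> [] \<and> (\<forall>b\<in>set bs. b = [True, False] \<or> b = [True, False, False])}"

definition delta :: "bool list \<Rightarrow> int" where
  "delta x = int (length (filter Not x)) - int (length (filter id x))"

end

theory Submission
  imports Defs
begin

fun stp :: "int \<times> int \<Rightarrow> bool \<Rightarrow> int \<times> int" where
  "stp (p,q) b = (if b then (p+q,q) else (p,p+q))"

definition run :: "int \<times> int \<Rightarrow> bool list \<Rightarrow> int \<times> int" where
  "run v xs = foldl stp v xs"

lemma run_Nil[simp]: "run v [] = v" by (simp add: run_def)
lemma run_Cons_pair: "run (p,q) (b # xs) = run (stp (p,q) b) xs" by (simp add: run_def)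
lemma run_Cons: "run v (b # xs) = run (stp v b) xs" by (simp add: run_def)
lemma run_append: "run v (xs @ ys) = run (run v xs) ys" by (simp add: run_def)

lemma bin_val_snoc: "bin_val (xs @ [b]) = 2 * bin_val xs + (if b then 1 else 0)"
  by (induction xs) auto

lemma bin_val_append: "bin_val (xs @ ys) = bin_val xs * 2 ^ length ys + bin_val ys"
  by (induction xs) (auto simp: power_add algebra_simps)

lemma bin_val_lt: "bin_val xs < 2 ^ length xs"
  by (induction xs) auto

lemma run_stern: "run (0,1) xs = (int (stern (bin_val xs)), int (stern (bin_val xs + 1)))"
proof (induction xs rule: rev_induct)
  case Nil
  then show ?case by simp
next
  case (snoc b xs)
  define m where "m = bin_val xs"
  have e: "stern (2 * m + 2) = stern (m + 1)"
    using stern_even[of "m+1"] by (simp add: algebra_simps)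
  show ?case
    using snoc stern_odd[of m] stern_even[of m] e
    by (simp add: bin_val_snoc m_def[symmetric] run_append run_Cons add.commute)
qed

lemma s_run: "int (s (bin_val xs)) = snd (run (0,1) xs)"
  by (simp add: s_def run_stern)

definition T :: "bool list" where "T = [True, False]"
definition H :: "bool list" where "H = [True, False, False]"

definition tw :: "nat \<Rightarrow> bool list" where "tw k = concat (replicate k T)"

lemma tw_0[simp]: "tw 0 = []" by (simp add: tw_def)
lemma tw_Suc: "tw (Suc k) = True # False # tw k" by (simp add: tw_def T_def)
lemma length_tw[simp]: "length (tw k) = 2 * k" by (induction k) (auto simp: tw_Suc)

definition u :: "nat \<Rightarrow> int \<times> int" where "u k = run (0,1) (tw k)"

definition Ak :: "int \<times> int \<Rightarrow> int \<times> int \<Rightarrow> int \<times> int" where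
  "Ak v w = (fst v * (snd w - fst w) + snd v * fst w, fst v * fst w + snd v * snd w)"

lemma run_tw: "run v (tw k) = Ak v (u k)"
proof (induction k arbitrary: v)
  case 0
  then show ?case by (simp add: u_def Ak_def)
next
  case (Suc k)
  have "run v (tw (Suc k)) = Ak (run v [True,False]) (u k)"
    using Suc by (simp add: tw_Suc run_Cons)
  moreover have "u (Suc k) = run (1,2) (tw k)"
    by (simp add: u_def tw_Suc run_Cons)
  then have "u (Suc k) = Ak (1,2) (u k)" using Suc.IH by simp
  ultimately show ?case
    by (cases v) (simp add: Ak_def run_Cons algebra_simps)
qed

lemma u_Suc: "u (Suc k) = (fst (u k) + snd (u k), fst (u k) + 2 * snd (u k))"
  using run_tw[of "(1,2)" k] by (simp add: u_def tw_Suc Ak_def run_Cons)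

lemma u_cone: "0 \<le> fst (u k) \<and> 8 * fst (u k) \<le> 5 * snd (u k)"
proof (induction k)
  case 0
  then show ?case by (simp add: u_def)
next
  case (Suc k)
  then show ?case by (simp add: u_Suc)
qed

lemma run_tw_app: "run v (tw k @ S) = run (Ak v (u k)) S"
  by (simp add: run_append run_tw)

lemma run_lin: "run (p,q) S = (p * fst (run (1,0) S) + q * fst (run (0,1) S),
    p * snd (run (1,0) S) + q * snd (run (0,1) S))"
proof (induction S arbitrary: p q)
  case Nil
  then show ?case by simp
next
  case (Cons b S)
  show ?case
  proof (cases b)
    case True
    then show ?thesis using Cons[of "p+q" q] Cons[of 1 0] Cons[of 1 1]
      by (simp add: run_Cons_pair algebra_simps)
  next
    case False
    then show ?thesis using Cons[of p "p+q"] Cons[of 1 1] Cons[of 0 1]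
      by (simp add: run_Cons_pair algebra_simps)
  qed
qed

lemma run_tw_app_pair: "run (p,q) (tw k @ S) = run (Ak (p,q) (u k)) S"
  by (rule run_tw_app)
lemma run_tw_pair: "run (p,q) (tw k) = Ak (p,q) (u k)"
  by (rule run_tw)

lemma run_lin': "\<exists>a1 a2 b1 b2. \<forall>p q. run (p,q) S = (p*a1+q*a2, p*b1+q*b2)"
  using run_lin[of _ _ S] by blast

lemma Ak_g0: "Ak (p,q) (0,1) = (p,q)" by (simp add: Ak_def)
lemma Ak_g1: "Ak (p,q) (5,8) = (3*p+5*q, 5*p+8*q)" by (simp add: Ak_def)

lemma key:
  assumes h0: "snd (run (Ak v (0,1)) S) \<le> snd (run (Ak v' (0,1)) S')"
    and h1: "snd (run (Ak v (5,8)) S) \<le> snd (run (Ak v' (5,8)) S')"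
  shows "snd (run (Ak v (u k)) S) \<le> snd (run (Ak v' (u k)) S')"
proof -
  obtain x y where uk: "u k = (x,y)" by fastforce
  have x0: "0 \<le> x" and q0: "0 \<le> 5*y - 8*x" using u_cone[of k] uk by auto
  have lin: "5 * snd (run (Ak w (x,y)) T) = (5*y-8*x) * snd (run (Ak w (0,1)) T) + x * snd (run (Ak w (5,8)) T)"
    for w T
  proof -
    obtain p q where w: "w = (p,q)" by fastforce
    obtain a1 a2 b1 b2 where r: "\<And>p q. run (p,q) T = (p*a1+q*a2, p*b1+q*b2)"
      using run_lin'[of T] by blast
    show ?thesis
      by (simp add: w Ak_def r algebra_simps)
  qed
  have "(5*y-8*x) * snd (run (Ak v (0,1)) S) \<le> (5*y-8*x) * snd (run (Ak v' (0,1)) S')"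
    using h0 q0 by (rule mult_left_mono)
  moreover have "x * snd (run (Ak v (5,8)) S) \<le> x * snd (run (Ak v' (5,8)) S')"
    using h1 x0 by (rule mult_left_mono)
  ultimately have "5 * snd (run (Ak v (x,y)) S) \<le> 5 * snd (run (Ak v' (x,y)) S')"
    unfolding lin by linarith
  then show ?thesis using uk by simp
qed

lemma key':
  assumes h0: "snd (Ak v (0,1)) \<le> snd (run (Ak v' (0,1)) S')"
    and h1: "snd (Ak v (5,8)) \<le> snd (run (Ak v' (5,8)) S')"
  shows "snd (Ak v (u k)) \<le> snd (run (Ak v' (u k)) S')"
  using key[of v "[]" v' S' k] assms by simp

lemma ineq1: "snd (run (0,1) (tw a @ H @ [True,False] @ tw b @ H @ tw c @ H @ tw d @ H @ tw e))
  \<le> snd (run (0,1) (tw a @ H @ H @ tw b @ tw c @ tw d @ tw e @ [True,False,True,False,True,False,True,False]))"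
  unfolding run_tw_app_pair
  apply (rule key; simp add: H_def run_Cons_pair run_tw_app_pair run_tw_pair Ak_g0 Ak_g1)
  apply (rule key key'; simp add: H_def run_Cons_pair run_tw_app_pair run_tw_pair Ak_g0 Ak_g1)+
  done

lemma ineq2: "snd (run (0,1) (tw a @ H @ H @ tw c @ H @ tw d @ H @ tw e))
  \<le> snd (run (0,1) (tw a @ [True,False,False,False] @ tw c @ tw d @ tw e @ [True,False,True,False,True,False,True,False]))"
  unfolding run_tw_app_pair
  apply (rule key; simp add: H_def run_Cons_pair run_tw_app_pair run_tw_pair Ak_g0 Ak_g1)
  apply (rule key key'; simp add: H_def run_Cons_pair run_tw_app_pair run_tw_pair Ak_g0 Ak_g1)+
  done

definition cntH :: "bool list list \<Rightarrow> nat" where "cntH bs = length (filter (\<lambda>b. b = H) bs)"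

lemma delta_append: "delta (xs @ ys) = delta xs + delta ys"
  by (simp add: delta_def)

lemma delta_concat: "\<forall>b\<in>set bs. b = T \<or> b = H \<Longrightarrow> delta (concat bs) = int (cntH bs)"
proof (induction bs)
  case Nil
  then show ?case by (simp add: delta_def cntH_def)
next
  case (Cons b bs)
  have dT: "delta T = 0" by (simp add: delta_def T_def)
  have dH: "delta H = 1" by (simp add: delta_def H_def)
  have TH: "T \<noteq> H" by (simp add: T_def H_def)
  have e1: "delta (concat (b#bs)) = delta b + delta (concat bs)" by (simp add: delta_append)
  have e2: "delta (concat bs) = int (cntH bs)" using Cons by simp
  have "b = T \<or> b = H" using Cons.prems by simp
  then show ?case
  proof
    assume "b = T"
    then show ?thesis using e1 e2 dT TH by (simp add: cntH_def)
  next
    assume "b = H"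
    then show ?thesis using e1 e2 dH by (simp add: cntH_def)
  qed
qed

lemma split_H: "\<forall>b\<in>set bs. b = T \<or> b = H \<Longrightarrow> cntH bs = Suc k \<Longrightarrow>
  \<exists>a rest. bs = replicate a T @ H # rest \<and> (\<forall>b\<in>set rest. b = T \<or> b = H) \<and> cntH rest = k"
proof (induction bs)
  case Nil
  then show ?case by (simp add: cntH_def)
next
  case (Cons b bs)
  show ?case
  proof (cases "b = H")
    case True
    then show ?thesis using Cons.prems by (intro exI[of _ 0] exI[of _ bs]) (auto simp: cntH_def)
  next
    case False
    then have bT: "b = T" using Cons.prems by auto
    have "cntH bs = Suc k" using Cons.prems False by (simp add: cntH_def)
    then obtain a rest where "bs = replicate a T @ H # rest" "\<forall>b\<in>set rest. b = T \<or> b = H" "cntH rest = k"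
      using Cons.IH Cons.prems by auto
    then show ?thesis using bT by (intro exI[of _ "Suc a"] exI[of _ rest]) auto
  qed
qed

lemma TH_ne: "T \<noteq> H" "H \<noteq> T" by (simp_all add: T_def H_def)

lemma no_H: "\<forall>b\<in>set bs. b = T \<or> b = H \<Longrightarrow> cntH bs = 0 \<Longrightarrow> bs = replicate (length bs) T"
proof (induction bs)
  case Nil
  then show ?case by simp
next
  case (Cons b bs)
  then have "b \<noteq> H" by (auto simp: cntH_def)
  then have "b = T" using Cons.prems by simp
  moreover have "cntH bs = 0" using Cons.prems \<open>b = T\<close> TH_ne by (simp add: cntH_def)
  ultimately show ?case using Cons by simp
qed

lemma concat_split: "concat (replicate a T @ H # rest) = tw a @ H @ concat rest"
  by (simp add: tw_def)

lemma lt_lemma: "length r1 = length r2 \<Longrightarrow> bin_val (P @ False # r1) < bin_val (P @ True # r2)"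
  using bin_val_lt[of r1] by (simp add: bin_val_append)

lemma notR: "i < v \<Longrightarrow> s v \<le> s i \<Longrightarrow> v \<notin> R"
  by (auto simp: R_def)

theorem mainTheorem13:
  fixes n :: nat and x :: "bool list"
  assumes "n \<ge> 4" and "x \<in> B" and "length x = 2 * n + 4" and "delta x = 4"
  shows "bin_val x \<notin> R"
proof -
  obtain bs where x: "x = concat bs" and bsT: "\<forall>b\<in>set bs. b = T \<or> b = H"
    using assms(2) by (auto simp: B_def T_def H_def)
  have "cntH bs = 4" using delta_concat[OF bsT] assms(4) x by simp
  then have "cntH bs = Suc 3" by simp
  then obtain a r1 where bs: "bs = replicate a T @ H # r1" and r1T: "\<forall>b\<in>set r1. b = T \<or> b = H"
    and c1: "cntH r1 = Suc 2"
    using split_H[OF bsT] by auto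
  then obtain b r2 where r1: "r1 = replicate b T @ H # r2" and r2T: "\<forall>b\<in>set r2. b = T \<or> b = H"
    and c2: "cntH r2 = Suc 1"
    using split_H[OF r1T c1] by auto
  then obtain c r3 where r2: "r2 = replicate c T @ H # r3" and r3T: "\<forall>b\<in>set r3. b = T \<or> b = H"
    and c3: "cntH r3 = Suc 0"
    using split_H[OF r2T c2] by auto
  then obtain d r4 where r3: "r3 = replicate d T @ H # r4" and r4T: "\<forall>b\<in>set r4. b = T \<or> b = H"
    and c4: "cntH r4 = 0"
    using split_H[OF r3T c3] by auto
  define e where "e = length r4"
  have r4: "r4 = replicate e T" using no_H[OF r4T c4] e_def by simp
  have xe: "x = tw a @ H @ tw b @ H @ tw c @ H @ tw d @ H @ tw e"
    using x bs r1 r2 r3 r4 by (simp add: concat_split tw_def)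
  show ?thesis
  proof (cases b)
    case 0
    define y where "y = tw a @ [True,False,False,False] @ tw c @ tw d @ tw e @ [True,False,True,False,True,False,True,False]"
    have x2: "x = tw a @ H @ H @ tw c @ H @ tw d @ H @ tw e" using xe 0 by simp
    have "int (s (bin_val x)) \<le> int (s (bin_val y))"
      unfolding s_run x2 y_def by (rule ineq2)
    then have sle: "s (bin_val x) \<le> s (bin_val y)" by simp
    have "bin_val y < bin_val x"
    proof -
      have ey: "y = (tw a @ [True,False,False]) @ False # (tw c @ tw d @ tw e @ [True,False,True,False,True,False,True,False])"
        by (simp add: y_def)
      have ex: "x = (tw a @ [True,False,False]) @ True # (False # False # tw c @ H @ tw d @ H @ tw e)"
        by (simp add: x2 H_def)
      show ?thesis unfolding ey ex by (rule lt_lemma) (simp add: H_def)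
    qed
    then show ?thesis using sle by (rule notR)
  next
    case (Suc b')
    define y where "y = tw a @ H @ H @ tw b' @ tw c @ tw d @ tw e @ [True,False,True,False,True,False,True,False]"
    have x2: "x = tw a @ H @ [True,False] @ tw b' @ H @ tw c @ H @ tw d @ H @ tw e"
      using xe Suc by (simp add: tw_Suc)
    have "int (s (bin_val x)) \<le> int (s (bin_val y))"
      unfolding s_run x2 y_def by (rule ineq1)
    then have sle: "s (bin_val x) \<le> s (bin_val y)" by simp
    have "\<exists>r. tw b' @ H @ tw c @ H @ tw d @ H @ tw e = True # r"
      by (cases b') (simp_all add: tw_Suc H_def)
    then obtain r where r: "tw b' @ H @ tw c @ H @ tw d @ H @ tw e = True # r"
      by blast
    have lr: "length r = 2 * b' + 2 * c + 2 * d + 2 * e + 8"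
      using arg_cong[OF r, of length] by (simp add: H_def)
    have "bin_val y < bin_val x"
    proof -
      have ey: "y = (tw a @ [True,False,False,True,False]) @ False # (tw b' @ tw c @ tw d @ tw e @ [True,False,True,False,True,False,True,False])"
        by (simp add: y_def H_def)
      have ex: "x = (tw a @ [True,False,False,True,False]) @ True # r"
        unfolding x2 r[symmetric] by (simp add: H_def)
      show ?thesis unfolding ey ex by (rule lt_lemma) (simp add: lr)
    qed
    then show ?thesis using sle by (rule notR)
  qed
qed

end
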